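(* The graph $G_6$ on vertices $\{1,\dots,6\}$ with adjacency matrix $$A_{G_6}=\begin{pmatrix}0&0&0&0&1&1\\0&0&1&1&0&1\\0&1&0&1&0&1\\0&1&1&0&1&1\\1&0&0&1&0&0\\1&1&1&1&0&0\end{pmatrix}$$ does not possess quantum twin vertices.
   Context: A classical graph $G$ is regarded as a quantum graph with $C(G)=C(V)$ (functions on the vertex set), the uniform state $\psi(f)=\frac1{|V|}\sum_v f(v)$, and adjacency operator given by $A_G$. An action of a compact quantum group $\mathbb{H}$ on $G$ is a $\psi$-preserving action $\rho\colon C(V)\to C(V)\otimes C(\mathbb{H})$ with $\rho\circ A_G=(A_G\otimes\mathrm{id})\circ\rho$ (equivalently given by a magic unitary with entries in $C(\mathbb{H})$ commuting with $A_G$). $G$ has $\mathbb{H}$-twins if there are two different actions $\rho_1\neq\rho_2$ of $\mathbb{H}$ on $G$ with $\rho_1\circ A_G=\rho_2\circ A_G$; $G$ has quantum twin vertices if it has $\mathbb{H}$-twins for some compact quantum group $\mathbb{H}$. *)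

theory Defs
  imports Complex_Main
begin

text \<open>
  A compact quantum group H is encoded by its CQG algebra O(H) (the dense Hopf
  *-subalgebra of matrix coefficients), carried by a type 'a of class ring_1
  together with: a complex scalar multiplication sc, an involution st,
  a comultiplication Delta (a finite sum of elementary tensors, i.e. a list of pairs),
  counit eps, antipode S and a positive faithful Haar state h.
  Elements of the algebraic tensor product O(H) x O(H) are represented by lists of
  pairs; two such representatives are equal as tensors iff they agree under all
  products f x g of linear functionals, so every tensor identity is phrased via
  the pairing below.
\<close>

definition lin_fun :: "(complex \<Rightarrow> 'a::ring_1 \<Rightarrow> 'a) \<Rightarrow> ('a \<Rightarrow> complex) \<Rightarrow> bool" where
  "lin_fun sc f \<longleftrightarrow> (\<forall>x y. f (x + y) = f x + f y) \<and> (\<forall>c x. f (sc c x) = c * f x)"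

definition tpair :: "('a \<Rightarrow> complex) \<Rightarrow> ('a \<Rightarrow> complex) \<Rightarrow> ('a \<times> 'a) list \<Rightarrow> complex" where
  "tpair f g T = (\<Sum>p\<leftarrow>T. f (fst p) * g (snd p))"

definition star_algebra :: "(complex \<Rightarrow> 'a::ring_1 \<Rightarrow> 'a) \<Rightarrow> ('a \<Rightarrow> 'a) \<Rightarrow> bool" where
  "star_algebra sc st \<longleftrightarrow>
     (\<forall>c x y. sc c (x + y) = sc c x + sc c y) \<and>
     (\<forall>c d x. sc (c + d) x = sc c x + sc d x) \<and>
     (\<forall>c d x. sc (c * d) x = sc c (sc d x)) \<and>
     (\<forall>x. sc 1 x = x) \<and>
     (\<forall>c x y. sc c (x * y) = sc c x * y \<and> sc c (x * y) = x * sc c y) \<and>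
     (\<forall>x y. st (x + y) = st x + st y) \<and>
     (\<forall>c x. st (sc c x) = sc (cnj c) (st x)) \<and>
     (\<forall>x y. st (x * y) = st y * st x) \<and>
     (\<forall>x. st (st x) = x)"

definition hopf_star_algebra ::
  "(complex \<Rightarrow> 'a::ring_1 \<Rightarrow> 'a) \<Rightarrow> ('a \<Rightarrow> 'a) \<Rightarrow> ('a \<Rightarrow> ('a \<times> 'a) list)
     \<Rightarrow> ('a \<Rightarrow> complex) \<Rightarrow> ('a \<Rightarrow> 'a) \<Rightarrow> bool" where
  "hopf_star_algebra sc st Delta eps S \<longleftrightarrow>
     star_algebra sc st \<and>
     (\<forall>f g. lin_fun sc f \<longrightarrow> lin_fun sc g \<longrightarrow>
        (\<forall>a b. tpair f g (Delta (a + b)) = tpair f g (Delta a) + tpair f g (Delta b)) \<and>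
        (\<forall>c a. tpair f g (Delta (sc c a)) = c * tpair f g (Delta a)) \<and>
        (\<forall>a b. tpair f g (Delta (a * b)) =
              (\<Sum>p\<leftarrow>Delta a. \<Sum>q\<leftarrow>Delta b. f (fst p * fst q) * g (snd p * snd q))) \<and>
        tpair f g (Delta 1) = f 1 * g 1 \<and>
        (\<forall>a. tpair f g (Delta (st a)) =
              (\<Sum>p\<leftarrow>Delta a. f (st (fst p)) * g (st (snd p)))) \<and>
        (\<forall>k. lin_fun sc k \<longrightarrow> (\<forall>a.
            (\<Sum>p\<leftarrow>Delta a. tpair f g (Delta (fst p)) * k (snd p)) =
            (\<Sum>p\<leftarrow>Delta a. f (fst p) * tpair g k (Delta (snd p)))))) \<and>
     lin_fun sc eps \<and> eps 1 = 1 \<and> (\<forall>a b. eps (a * b) = eps a * eps b) \<and>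
     (\<forall>a. (\<Sum>p\<leftarrow>Delta a. sc (eps (fst p)) (snd p)) = a) \<and>
     (\<forall>a. (\<Sum>p\<leftarrow>Delta a. sc (eps (snd p)) (fst p)) = a) \<and>
     (\<forall>x y. S (x + y) = S x + S y) \<and> (\<forall>c x. S (sc c x) = sc c (S x)) \<and>
     (\<forall>a. (\<Sum>p\<leftarrow>Delta a. S (fst p) * snd p) = sc (eps a) 1) \<and>
     (\<forall>a. (\<Sum>p\<leftarrow>Delta a. fst p * S (snd p)) = sc (eps a) 1)"

text \<open>CQG algebra = Hopf *-algebra with a positive faithful (two-sided invariant) Haar state
  (Dijkhuizen--Koornwinder); these are exactly the algebras O(H) of compact quantum groups H.\<close>
definition cqg_algebra ::
  "(complex \<Rightarrow> 'a::ring_1 \<Rightarrow> 'a) \<Rightarrow> ('a \<Rightarrow> 'a) \<Rightarrow> ('a \<Rightarrow> ('a \<times> 'a) list)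
     \<Rightarrow> ('a \<Rightarrow> complex) \<Rightarrow> ('a \<Rightarrow> 'a) \<Rightarrow> ('a \<Rightarrow> complex) \<Rightarrow> bool" where
  "cqg_algebra sc st Delta eps S h \<longleftrightarrow>
     hopf_star_algebra sc st Delta eps S \<and>
     lin_fun sc h \<and> h 1 = 1 \<and>
     (\<forall>a. (\<Sum>p\<leftarrow>Delta a. sc (h (fst p)) (snd p)) = sc (h a) 1) \<and>
     (\<forall>a. (\<Sum>p\<leftarrow>Delta a. sc (h (snd p)) (fst p)) = sc (h a) 1) \<and>
     (\<forall>a. a \<noteq> 0 \<longrightarrow> Im (h (st a * a)) = 0 \<and> Re (h (st a * a)) > 0)"

definition magic_unitary :: "('a::ring_1 \<Rightarrow> 'a) \<Rightarrow> 'v set \<Rightarrow> ('v \<Rightarrow> 'v \<Rightarrow> 'a) \<Rightarrow> bool" where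
  "magic_unitary st V u \<longleftrightarrow>
     (\<forall>i\<in>V. \<forall>j\<in>V. st (u i j) = u i j \<and> u i j * u i j = u i j) \<and>
     (\<forall>i\<in>V. (\<Sum>j\<in>V. u i j) = 1) \<and>
     (\<forall>j\<in>V. (\<Sum>i\<in>V. u i j) = 1)"

definition mat_times_adj :: "'v set \<Rightarrow> ('v \<Rightarrow> 'v \<Rightarrow> 'a::ring_1) \<Rightarrow> ('v \<Rightarrow> 'v \<Rightarrow> nat) \<Rightarrow> 'v \<Rightarrow> 'v \<Rightarrow> 'a" where
  "mat_times_adj V u A i j = (\<Sum>k\<in>V. u i k * of_nat (A k j))"

definition adj_times_mat :: "'v set \<Rightarrow> ('v \<Rightarrow> 'v \<Rightarrow> nat) \<Rightarrow> ('v \<Rightarrow> 'v \<Rightarrow> 'a::ring_1) \<Rightarrow> 'v \<Rightarrow> 'v \<Rightarrow> 'a" where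
  "adj_times_mat V A u i j = (\<Sum>k\<in>V. of_nat (A i k) * u k j)"

text \<open>It corresponds to the coaction rho(e_j) = sum_i e_i (x) u_ij.\<close>
definition graph_action ::
  "(complex \<Rightarrow> 'a::ring_1 \<Rightarrow> 'a) \<Rightarrow> ('a \<Rightarrow> 'a) \<Rightarrow> ('a \<Rightarrow> ('a \<times> 'a) list)
     \<Rightarrow> 'v set \<Rightarrow> ('v \<Rightarrow> 'v \<Rightarrow> nat) \<Rightarrow> ('v \<Rightarrow> 'v \<Rightarrow> 'a) \<Rightarrow> bool" where
  "graph_action sc st Delta V A u \<longleftrightarrow>
     magic_unitary st V u \<and>
     (\<forall>i\<in>V. \<forall>j\<in>V. \<forall>f g. lin_fun sc f \<longrightarrow> lin_fun sc g \<longrightarrow>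
        tpair f g (Delta (u i j)) = (\<Sum>k\<in>V. f (u i k) * g (u k j))) \<and>
     (\<forall>i\<in>V. \<forall>j\<in>V. mat_times_adj V u A i j = adj_times_mat V A u i j)"

text \<open>H-twins: two different actions rho_1 \<noteq> rho_2 with rho_1 o A = rho_2 o A,
  i.e. u_1 \<noteq> u_2 and u_1 A = u_2 A.\<close>
definition has_H_twins ::
  "(complex \<Rightarrow> 'a::ring_1 \<Rightarrow> 'a) \<Rightarrow> ('a \<Rightarrow> 'a) \<Rightarrow> ('a \<Rightarrow> ('a \<times> 'a) list)
     \<Rightarrow> 'v set \<Rightarrow> ('v \<Rightarrow> 'v \<Rightarrow> nat) \<Rightarrow> bool" where
  "has_H_twins sc st Delta V A \<longleftrightarrow>
     (\<exists>u1 u2. graph_action sc st Delta V A u1 \<and> graph_action sc st Delta V A u2 \<and>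
        (\<exists>i\<in>V. \<exists>j\<in>V. u1 i j \<noteq> u2 i j) \<and>
        (\<forall>i\<in>V. \<forall>j\<in>V. mat_times_adj V u1 A i j = mat_times_adj V u2 A i j))"

definition G6_V :: "nat set" where "G6_V = {1..6}"

definition G6_A :: "nat \<Rightarrow> nat \<Rightarrow> nat" where
  "G6_A i j = [[0,0,0,0,1,1],
               [0,0,1,1,0,1],
               [0,1,0,1,0,1],
               [0,1,1,0,1,1],
               [1,0,0,1,0,0],
               [1,1,1,1,0,0]] ! (i - 1) ! (j - 1)"

end

theory Submission imports Defs begin

lemma G6_V_eq: "G6_V = {1,2,3,4,5,6}" by (auto simp: G6_V_def)

lemma sum6: "(\<Sum>k\<in>G6_V. f k) = f 1 + f 2 + f 3 + f 4 + f 5 + f 6"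
  by (simp add: G6_V_eq add.assoc)

lemma mta: 
 "mat_times_adj G6_V u G6_A i 1 = u i 5 + u i 6"
 "mat_times_adj G6_V u G6_A i 2 = u i 3 + u i 4 + u i 6"
 "mat_times_adj G6_V u G6_A i 3 = u i 2 + u i 4 + u i 6"
 "mat_times_adj G6_V u G6_A i 4 = u i 2 + u i 3 + u i 5 + u i 6"
 "mat_times_adj G6_V u G6_A i 5 = u i 1 + u i 4"
 "mat_times_adj G6_V u G6_A i 6 = u i 1 + u i 2 + u i 3 + u i 4"
  by (simp_all add: mat_times_adj_def sum6 G6_A_def)

lemma atm: 
 "adj_times_mat G6_V G6_A u 1 j = u 5 j + u 6 j"
 "adj_times_mat G6_V G6_A u 2 j = u 3 j + u 4 j + u 6 j"
 "adj_times_mat G6_V G6_A u 3 j = u 2 j + u 4 j + u 6 j"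
 "adj_times_mat G6_V G6_A u 4 j = u 2 j + u 3 j + u 5 j + u 6 j"
 "adj_times_mat G6_V G6_A u 5 j = u 1 j + u 4 j"
 "adj_times_mat G6_V G6_A u 6 j = u 1 j + u 2 j + u 3 j + u 4 j"
  by (simp_all add: adj_times_mat_def sum6 G6_A_def)

lemma rowsolve:
  fixes a1 a2 a3 a4 a5 a6 :: "'a::ab_group_add"
  assumes hv: "\<And>x::'a. x + x = 0 \<Longrightarrow> x = 0"
    and E1: "a5+a6=0" and E2: "a3+a4+a6=0" and E3: "a2+a4+a6=0"
    and E5: "a1+a4=0" and E6: "a1+a2+a3+a4=0"
  shows "a2=0 \<and> a3=0 \<and> a4 = -a1 \<and> a5 = -a1 \<and> a6 = a1"
proof -
  have "a3 - a2 = (a3+a4+a6) - (a2+a4+a6)" by (simp add: algebra_simps)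
  hence 32: "a3 = a2" using E2 E3 by simp
  have "a2 + a2 = (a1+a2+a3+a4) - (a1+a4)" using 32 by (simp add: algebra_simps)
  hence "a2 + a2 = 0" using E5 E6 by simp
  hence "a2 = 0" by (rule hv)
  moreover have "a4 = - a1" using E5 by (simp add: eq_neg_iff_add_eq_0 add.commute)
  moreover have "a6 = a1" using E3 \<open>a2 = 0\<close> \<open>a4 = - a1\<close> by (simp add: algebra_simps)
  moreover have "a5 = - a1" using E1 \<open>a6 = a1\<close> by (simp add: eq_neg_iff_add_eq_0)
  ultimately show ?thesis using 32 by simp
qed

lemma halve:
  fixes sc :: "complex \<Rightarrow> 'a::ring_1 \<Rightarrow> 'a" and x :: 'a
  assumes "star_algebra sc st" and "x + x = 0"
  shows "x = 0"
proof -
  have sc0: "sc c 0 = 0" for c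
  proof -
    have "sc c (0+0) = sc c 0 + sc c 0" using assms(1) unfolding star_algebra_def by blast
    thus ?thesis by simp
  qed
  have "x = sc 1 x" using assms(1) unfolding star_algebra_def by simp
  also have "\<dots> = sc (1/2 + 1/2) x" by simp
  also have "\<dots> = sc (1/2) x + sc (1/2) x" using assms(1) unfolding star_algebra_def by blast
  also have "\<dots> = sc (1/2) (x + x)"
  proof -
    have "\<forall>c x y. sc c (x + y) = sc c x + sc c y" using assms(1) unfolding star_algebra_def by blast
    thus ?thesis by simp
  qed
  also have "\<dots> = 0" using assms(2) sc0 by simp
  finally show ?thesis .
qed

lemma posproj:
  fixes sc :: "complex \<Rightarrow> 'a::ring_1 \<Rightarrow> 'a" and p :: 'a
  assumes "cqg_algebra sc st Delta eps S h" and "st p = p" and "p * p = p"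
  shows "Re (h p) \<ge> 0" and "Re (h p) = 0 \<Longrightarrow> p = 0"
proof -
  have lin: "lin_fun sc h" using assms(1) unfolding cqg_algebra_def by blast
  have h0: "h 0 = 0"
  proof -
    have "h (0+0) = h 0 + h 0" using lin unfolding lin_fun_def by blast
    thus ?thesis by simp
  qed
  have pos: "\<forall>a. a \<noteq> 0 \<longrightarrow> Im (h (st a * a)) = 0 \<and> Re (h (st a * a)) > 0"
    using assms(1) unfolding cqg_algebra_def by blast
  have fa: "p \<noteq> 0 \<Longrightarrow> Re (h p) > 0"
  proof -
    assume "p \<noteq> 0"
    hence "Re (h (st p * p)) > 0" using pos by blast
    thus ?thesis using assms(2,3) by simp
  qed
  show "Re (h p) \<ge> 0" using fa h0 by (cases "p = 0") (auto simp: less_imp_le)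
  show "Re (h p) = 0 \<Longrightarrow> p = 0" using fa by force
qed


lemma u14:
  fixes sc :: "complex \<Rightarrow> 'a::ring_1 \<Rightarrow> 'a" and u :: "nat \<Rightarrow> nat \<Rightarrow> 'a"
  assumes cqg: "cqg_algebra sc st Delta eps S h"
    and ga: "graph_action sc st Delta G6_V G6_A u"
  shows "u 1 4 = 0"
proof -
  have mu: "magic_unitary st G6_V u" using ga unfolding graph_action_def by blast
  have comm: "\<And>i j. i \<in> G6_V \<Longrightarrow> j \<in> G6_V \<Longrightarrow> mat_times_adj G6_V u G6_A i j = adj_times_mat G6_V G6_A u i j"
    using ga unfolding graph_action_def by blast
  have rs: "\<And>i. i \<in> G6_V \<Longrightarrow> (\<Sum>j\<in>G6_V. u i j) = 1" using mu unfolding magic_unitary_def by blast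
  have pr: "\<And>i j. i \<in> G6_V \<Longrightarrow> j \<in> G6_V \<Longrightarrow> st (u i j) = u i j \<and> u i j * u i j = u i j"
    using mu unfolding magic_unitary_def by blast
  have V: "1 \<in> G6_V" "2 \<in> G6_V" "3 \<in> G6_V" "4 \<in> G6_V" "5 \<in> G6_V" "6 \<in> G6_V"
    by (auto simp: G6_V_def)
  have c1: "u 1 5 + u 1 6 = u 5 1 + u 6 1" using comm[OF V(1) V(1)] unfolding mta atm .
  have c2: "u 1 3 + u 1 4 + u 1 6 = u 5 2 + u 6 2" using comm[OF V(1) V(2)] unfolding mta atm .
  have c3: "u 1 2 + u 1 4 + u 1 6 = u 5 3 + u 6 3" using comm[OF V(1) V(3)] unfolding mta atm .
  have c4: "u 1 2 + u 1 3 + u 1 5 + u 1 6 = u 5 4 + u 6 4" using comm[OF V(1) V(4)] unfolding mta atm .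
  have c5: "u 1 1 + u 1 4 = u 5 5 + u 6 5" using comm[OF V(1) V(5)] unfolding mta atm .
  have c6: "u 1 1 + u 1 2 + u 1 3 + u 1 4 = u 5 6 + u 6 6" using comm[OF V(1) V(6)] unfolding mta atm .
  have r1: "u 1 1 + u 1 2 + u 1 3 + u 1 4 + u 1 5 + u 1 6 = 1" using rs[OF V(1)] by (simp add: sum6)
  have r5: "u 5 1 + u 5 2 + u 5 3 + u 5 4 + u 5 5 + u 5 6 = 1" using rs[OF V(5)] by (simp add: sum6)
  have r6: "u 6 1 + u 6 2 + u 6 3 + u 6 4 + u 6 5 + u 6 6 = 1" using rs[OF V(6)] by (simp add: sum6)
  have "u 1 2 + u 1 3 + u 1 4 + u 1 4 + u 1 6 + u 1 6 =
     ((u 1 5 + u 1 6) + (u 1 3 + u 1 4 + u 1 6) + (u 1 2 + u 1 4 + u 1 6) + (u 1 2 + u 1 3 + u 1 5 + u 1 6)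
      + (u 1 1 + u 1 4) + (u 1 1 + u 1 2 + u 1 3 + u 1 4))
     - (u 1 1 + u 1 2 + u 1 3 + u 1 4 + u 1 5 + u 1 6) - (u 1 1 + u 1 2 + u 1 3 + u 1 4 + u 1 5 + u 1 6)"
    by (simp add: algebra_simps)
  also have "\<dots> = ((u 5 1 + u 6 1) + (u 5 2 + u 6 2) + (u 5 3 + u 6 3) + (u 5 4 + u 6 4) + (u 5 5 + u 6 5) + (u 5 6 + u 6 6)) - 1 - 1"
    unfolding r1 by (simp only: c1 c2 c3 c4 c5 c6)
  also have "\<dots> = (u 5 1 + u 5 2 + u 5 3 + u 5 4 + u 5 5 + u 5 6) + (u 6 1 + u 6 2 + u 6 3 + u 6 4 + u 6 5 + u 6 6) - 1 - 1"
    by (simp add: algebra_simps)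
  also have "\<dots> = 0" by (simp only: r5 r6) simp
  finally have T: "u 1 2 + u 1 3 + u 1 4 + u 1 4 + u 1 6 + u 1 6 = 0" .
  have lin: "lin_fun sc h" using cqg unfolding cqg_algebra_def by blast
  hence hadd: "\<And>x y. h (x + y) = h x + h y" unfolding lin_fun_def by blast
  have h0: "h 0 = 0" using hadd[of 0 0] by simp
  have "h (u 1 2) + h (u 1 3) + h (u 1 4) + h (u 1 4) + h (u 1 6) + h (u 1 6) = 0"
    using arg_cong[OF T, of h] by (simp add: hadd h0)
  hence "Re (h (u 1 2)) + Re (h (u 1 3)) + Re (h (u 1 4)) + Re (h (u 1 4)) + Re (h (u 1 6)) + Re (h (u 1 6)) = 0"
    by (metis plus_complex.sel(1) zero_complex.sel(1))
  moreover have "Re (h (u 1 k)) \<ge> 0" if "k \<in> G6_V" for k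
    using posproj(1)[OF cqg] pr[OF V(1) that] by blast
  ultimately have "Re (h (u 1 4)) = 0" using V by (smt (verit))
  thus ?thesis using posproj(2)[OF cqg] pr[OF V(1) V(4)] by blast
qed


lemma d2: fixes a1 :: "'a::ab_group_add" shows "a1+a2 = b1+b2 \<Longrightarrow> (a1-b1)+(a2-b2) = 0"
proof -
  assume e: "a1+a2 = b1+b2"
  have "(a1-b1)+(a2-b2) = (a1+a2)-(b1+b2)" by (simp add: algebra_simps)
  thus ?thesis using e by simp
qed
lemma d3: fixes a1 :: "'a::ab_group_add" shows "a1+a2+a3 = b1+b2+b3 \<Longrightarrow> (a1-b1)+(a2-b2)+(a3-b3) = 0"
proof -
  assume e: "a1+a2+a3 = b1+b2+b3"
  have "(a1-b1)+(a2-b2)+(a3-b3) = (a1+a2+a3)-(b1+b2+b3)" by (simp add: algebra_simps)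
  thus ?thesis using e by simp
qed
lemma d4: fixes a1 :: "'a::ab_group_add" shows "a1+a2+a3+a4 = b1+b2+b3+b4 \<Longrightarrow> (a1-b1)+(a2-b2)+(a3-b3)+(a4-b4) = 0"
proof -
  assume e: "a1+a2+a3+a4 = b1+b2+b3+b4"
  have "(a1-b1)+(a2-b2)+(a3-b3)+(a4-b4) = (a1+a2+a3+a4)-(b1+b2+b3+b4)" by (simp add: algebra_simps)
  thus ?thesis using e by simp
qed

theorem mainTheorem8:
  fixes sc :: "complex \<Rightarrow> 'a::ring_1 \<Rightarrow> 'a" and st :: "'a \<Rightarrow> 'a"
    and Delta :: "'a \<Rightarrow> ('a \<times> 'a) list" and eps :: "'a \<Rightarrow> complex"
    and S :: "'a \<Rightarrow> 'a" and h :: "'a \<Rightarrow> complex"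
  assumes "cqg_algebra sc st Delta eps S h"
  shows "\<not> has_H_twins sc st Delta G6_V G6_A"
proof
  assume "has_H_twins sc st Delta G6_V G6_A"
  then obtain u1 u2 where g1: "graph_action sc st Delta G6_V G6_A u1"
    and g2: "graph_action sc st Delta G6_V G6_A u2"
    and ne: "\<exists>i\<in>G6_V. \<exists>j\<in>G6_V. u1 i j \<noteq> u2 i j"
    and meq: "\<forall>i\<in>G6_V. \<forall>j\<in>G6_V. mat_times_adj G6_V u1 G6_A i j = mat_times_adj G6_V u2 G6_A i j"
    unfolding has_H_twins_def by blast
  have sa: "star_algebra sc st" using assms unfolding cqg_algebra_def hopf_star_algebra_def by blast
  have hv: "\<And>x::'a. x + x = 0 \<Longrightarrow> x = 0" using halve[OF sa] by blast
  have V: "1 \<in> G6_V" "2 \<in> G6_V" "3 \<in> G6_V" "4 \<in> G6_V" "5 \<in> G6_V" "6 \<in> G6_V"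
    by (auto simp: G6_V_def)
  have cm1: "\<And>i j. i \<in> G6_V \<Longrightarrow> j \<in> G6_V \<Longrightarrow> mat_times_adj G6_V u1 G6_A i j = adj_times_mat G6_V G6_A u1 i j"
    using g1 unfolding graph_action_def by blast
  have cm2: "\<And>i j. i \<in> G6_V \<Longrightarrow> j \<in> G6_V \<Longrightarrow> mat_times_adj G6_V u2 G6_A i j = adj_times_mat G6_V G6_A u2 i j"
    using g2 unfolding graph_action_def by blast
  have aeq: "\<And>i j. i \<in> G6_V \<Longrightarrow> j \<in> G6_V \<Longrightarrow> adj_times_mat G6_V G6_A u1 i j = adj_times_mat G6_V G6_A u2 i j"
    using cm1 cm2 meq by metis
  define w where "w i j = u1 i j - u2 i j" for i j
  have rowrel: "w i 2 = 0 \<and> w i 3 = 0 \<and> w i 4 = - w i 1 \<and> w i 5 = - w i 1 \<and> w i 6 = w i 1"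
    if i: "i \<in> G6_V" for i
  proof (rule rowsolve[OF hv])
    show "w i 5 + w i 6 = 0" using meq[rule_format, OF i V(1)] unfolding w_def mta by (blast intro: d2)
    show "w i 3 + w i 4 + w i 6 = 0" using meq[rule_format, OF i V(2)] unfolding w_def mta by (blast intro: d3)
    show "w i 2 + w i 4 + w i 6 = 0" using meq[rule_format, OF i V(3)] unfolding w_def mta by (blast intro: d3)
    show "w i 1 + w i 4 = 0" using meq[rule_format, OF i V(5)] unfolding w_def mta by (blast intro: d2)
    show "w i 1 + w i 2 + w i 3 + w i 4 = 0" using meq[rule_format, OF i V(6)] unfolding w_def mta by (blast intro: d4)
  qed
  have colrel: "w 2 j = 0 \<and> w 3 j = 0 \<and> w 4 j = - w 1 j \<and> w 5 j = - w 1 j \<and> w 6 j = w 1 j"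
    if j: "j \<in> G6_V" for j
  proof (rule rowsolve[OF hv])
    show "w 5 j + w 6 j = 0" using aeq[OF V(1) j] unfolding w_def atm by (blast intro: d2)
    show "w 3 j + w 4 j + w 6 j = 0" using aeq[OF V(2) j] unfolding w_def atm by (blast intro: d3)
    show "w 2 j + w 4 j + w 6 j = 0" using aeq[OF V(3) j] unfolding w_def atm by (blast intro: d3)
    show "w 1 j + w 4 j = 0" using aeq[OF V(5) j] unfolding w_def atm by (blast intro: d2)
    show "w 1 j + w 2 j + w 3 j + w 4 j = 0" using aeq[OF V(6) j] unfolding w_def atm by (blast intro: d4)
  qed
  have "w 1 4 = 0" unfolding w_def using u14[OF assms g1] u14[OF assms g2] by simp
  hence w11: "w 1 1 = 0" using rowrel[OF V(1)] by simp
  have w1: "w 1 j = 0" if "j \<in> G6_V" for j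
    using that w11 rowrel[OF V(1)] unfolding G6_V_eq by auto
  have "w i j = 0" if "i \<in> G6_V" "j \<in> G6_V" for i j
    using that w1[OF that(2)] colrel[OF that(2)] unfolding G6_V_eq by auto
  thus False using ne unfolding w_def by auto
qed

end
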